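(* Let $k\ge 3$ be an integer such that every set of $k-1$ distinct positive integers has the LR property. Let $\{v_1,\ldots,v_k\}$ be a set of $k$ distinct positive integers with $\gcd(v_1,\ldots,v_k)=1$ but $\gcd(v_1,\ldots,v_{k-1})\neq 1$. Then $\{v_1,\ldots,v_k\}$ has the LR property.
   Context: For a real number $x$, $\|x\|$ denotes the distance from $x$ to the nearest integer. A finite set $S$ of $m$ integers has the LR (lonely runner) property if there exists a real $t$ such that $\|tv\|\ge \frac{1}{m+1}$ for all $v\in S$. The hypothesis "every set of $k-1$ distinct positive integers has the LR property" is what the paper calls "the lonely runner conjecture holds for $k-1$". *)

theory Defs
  imports Complex_Main
begin

definition dist_nint :: "real \<Rightarrow> real" where
  "dist_nint x = (INF n::int. \<bar>x - of_int n\<bar>)"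

definition LR_property :: "int set \<Rightarrow> bool" where
  "LR_property S \<longleftrightarrow> (\<exists>t::real. \<forall>v\<in>S. dist_nint (t * of_int v) \<ge> 1 / (real (card S) + 1))"

end

theory Submission
  imports Defs
begin

lemma dn_ge: "c \<le> dist_nint x \<longleftrightarrow> (\<forall>n::int. c \<le> \<bar>x - of_int n\<bar>)"
proof
  assume "c \<le> dist_nint x"
  moreover have "dist_nint x \<le> \<bar>x - of_int n\<bar>" for n
    unfolding dist_nint_def by (rule cINF_lower) (auto intro: bdd_belowI[where m=0])
  ultimately show "\<forall>n::int. c \<le> \<bar>x - of_int n\<bar>" by (meson order_trans)
next
  assume "\<forall>n::int. c \<le> \<bar>x - of_int n\<bar>"
  then show "c \<le> dist_nint x" unfolding dist_nint_def by (intro cINF_greatest) auto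
qed

lemma dn_shift: "c \<le> dist_nint x \<Longrightarrow> c \<le> dist_nint (x + of_int m)"
  unfolding dn_ge
proof
  fix n :: int assume h: "\<forall>n::int. c \<le> \<bar>x - of_int n\<bar>"
  have "\<bar>x + of_int m - of_int n\<bar> = \<bar>x - of_int (n - m)\<bar>" by simp
  then show "c \<le> \<bar>x + of_int m - of_int n\<bar>" using h by metis
qed

lemma dn_quarter: assumes "1/4 \<le> z" "z < 3/4" shows "1/4 \<le> dist_nint z"
  unfolding dn_ge
proof
  fix n :: int
  show "1/4 \<le> \<bar>z - of_int n\<bar>"
  proof (cases "n \<le> 0")
    case True then have "real_of_int n \<le> 0" by simp
    then show ?thesis using assms by linarith
  next
    case False then have "real_of_int n \<ge> 1" by simp
    then show ?thesis using assms by linarith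
  qed
qed

theorem lemma4:
  fixes k :: nat and v :: "nat \<Rightarrow> int"
  assumes "k \<ge> 3"
    and LR_km1: "\<forall>S::int set. finite S \<and> card S = k - 1 \<and> (\<forall>x\<in>S. x > 0) \<longrightarrow> LR_property S"
    and pos: "\<forall>i\<in>{1..k}. v i > 0"
    and dist: "inj_on v {1..k}"
    and gcd_all: "Gcd (v ` {1..k}) = 1"
    and gcd_part: "Gcd (v ` {1..k-1}) \<noteq> 1"
  shows "LR_property (v ` {1..k})"
proof -
  define d where "d = Gcd (v ` {1..k-1})"
  have dvdi: "d dvd v i" if "i \<in> {1..k-1}" for i
    unfolding d_def using that by (intro Gcd_dvd) auto
  have d0: "d \<ge> 0" unfolding d_def by simp
  have "1 \<in> {1..k-1}" using assms(1) by auto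
  then have "d dvd v 1" by (rule dvdi)
  moreover have "v 1 > 0" using pos assms(1) by auto
  ultimately have "d \<noteq> 0" by auto
  with d0 gcd_part d_def have d2: "d \<ge> 2" by linarith
  have cop: "gcd (v k) d = 1"
  proof -
    have "gcd (v k) d dvd Gcd (v ` {1..k})"
    proof (rule Gcd_greatest)
      fix b assume "b \<in> v ` {1..k}"
      then obtain i where i: "i \<in> {1..k}" "b = v i" by auto
      show "gcd (v k) d dvd b"
      proof (cases "i = k")
        case True then show ?thesis using i by simp
      next
        case False then have "i \<in> {1..k-1}" using i by auto
        then have "d dvd v i" by (rule dvdi)
        then show ?thesis using i by (meson dvd_trans gcd_dvd2)
      qed
    qed
    then show ?thesis using gcd_all by simp
  qed
  obtain a b where ab: "a * v k + b * d = 1" using bezout_int[of "v k" d] cop by auto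
  define w where "w i = v i div d" for i
  have vw: "v i = d * w i" if "i \<in> {1..k-1}" for i
    using dvdi[OF that] unfolding w_def by simp
  define W where "W = w ` {1..k-1}"
  have injw: "inj_on w {1..k-1}"
  proof (rule inj_onI)
    fix x y assume "x \<in> {1..k-1}" "y \<in> {1..k-1}" "w x = w y"
    then have "v x = v y" using vw by metis
    then show "x = y" using dist \<open>x \<in> {1..k-1}\<close> \<open>y \<in> {1..k-1}\<close>
      by (auto dest: inj_onD)
  qed
  have cardW: "card W = k - 1" unfolding W_def using card_image[OF injw] by simp
  have posW: "\<forall>x\<in>W. x > 0"
  proof
    fix x assume "x \<in> W"
    then obtain i where i: "i \<in> {1..k-1}" "x = w i" unfolding W_def by auto
    have "v i > 0" using pos i by auto
    then have "d * w i > 0" using vw[OF i(1)] by simp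
    then show "x > 0" using i d2 by (simp add: zero_less_mult_iff)
  qed
  have "LR_property W" using LR_km1 cardW posW W_def by auto
  then obtain t where t: "\<forall>x\<in>W. 1 / (real (card W) + 1) \<le> dist_nint (t * of_int x)"
    unfolding LR_property_def by auto
  have k1: "real (card W) + 1 = real k" using cardW assms(1) by auto
  define x0 where "x0 = t * of_int (v k) / of_int d"
  define m where "m = \<lceil>of_int d * (1/4 - x0)\<rceil>"
  define j where "j = m * a"
  define s where "s = (t + of_int j) / of_int d"
  have dr: "real_of_int d \<ge> 2" using d2 by simp
  have cardV: "card (v ` {1..k}) = k" using card_image[OF dist] by simp
  have lb: "1 / (real k + 1) \<le> 1 / real k" using assms(1) by (simp add: frac_le)
  have lb4: "1 / (real k + 1) \<le> 1/4" using assms(1) by (simp add: frac_le)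
  have "\<forall>x\<in>v ` {1..k}. 1 / (real k + 1) \<le> dist_nint (s * of_int x)"
  proof
    fix x assume "x \<in> v ` {1..k}"
    then obtain i where i: "i \<in> {1..k}" "x = v i" by auto
    show "1 / (real k + 1) \<le> dist_nint (s * of_int x)"
    proof (cases "i = k")
      case False
      then have i1: "i \<in> {1..k-1}" using i by auto
      have "s * of_int x = t * of_int (w i) + of_int (j * w i)"
        using i vw[OF i1] dr unfolding s_def by (simp add: field_simps)
      moreover have "1 / real k \<le> dist_nint (t * of_int (w i))"
        using t i1 k1 unfolding W_def by auto
      ultimately show ?thesis using lb dn_shift by (metis order_trans)
    next
      case True
      have m1: "of_int m \<ge> of_int d * (1/4 - x0)" unfolding m_def by linarith
      have m2: "of_int m < of_int d * (1/4 - x0) + 1" unfolding m_def by linarith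
      have z1: "1/4 \<le> x0 + of_int m / of_int d" using m1 dr by (simp add: field_simps)
      have "of_int m / of_int d < (of_int d * (1/4 - x0) + 1) / of_int d"
        using m2 dr by (intro divide_strict_right_mono) auto
      also have "\<dots> = 1/4 - x0 + 1 / of_int d" using dr by (simp add: field_simps)
      finally have "x0 + of_int m / of_int d < 1/4 + 1 / of_int d" by linarith
      moreover have "1 / real_of_int d \<le> 1/2" using dr by (simp add: field_simps)
      ultimately have z2: "x0 + of_int m / of_int d < 3/4" by linarith
      have abr: "real_of_int a * of_int (v k) = 1 - of_int b * of_int d"
        using arg_cong[OF ab, of real_of_int] by simp
      have "s * of_int x = x0 + of_int j * of_int (v k) / of_int d"
        using True i dr unfolding s_def x0_def by (simp add: field_simps)
      also have "\<dots> = x0 + of_int m * (real_of_int a * of_int (v k)) / of_int d"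
        unfolding j_def by simp
      also have "\<dots> = x0 + of_int m / of_int d + of_int (- m * b)"
        unfolding abr using dr by (simp add: field_simps)
      finally have "s * of_int x = x0 + of_int m / of_int d + of_int (- m * b)" .
      then show ?thesis using dn_quarter[OF z1 z2] dn_shift lb4 by (metis order_trans)
    qed
  qed
  then show ?thesis unfolding LR_property_def cardV by auto
qed

end
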